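(* Let $d\ge1$ and $C\subset\mathbb R^d$ an adapted cone, and set $a=\mathbb P(\xi_1\in C)^{-1}$. If $\mathbb E\big(\Vert\xi_1\Vert^2a^{\Vert\xi_1\Vert^2}\big)<\infty$, then $\mathbb P(T_C>n)\ge a^{-n}$ for all $n$, and $\mathbb P\big(\max_{1\le i\le n}\Vert\xi_i\Vert>\sqrt n\,\big|\,T_C>n\big)\to0$ as $n\to\infty$.
   Context: $(\xi_n)_{n\ge1}$ i.i.d. random vectors in $\mathbb R^d$ with mean zero and covariance $\sigma^2I_d$, $\sigma^2>0$; $S_n=\xi_1+\cdots+\xi_n$. A linear cone $C$ ($\lambda C=C$ for all $\lambda>0$) is adapted if convex, with non-empty interior, and $\mathbb P(\xi_1\in C\setminus\{0\})>0$. $T_C=\inf\{n\ge1:S_n\notin C\}$. *)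

theory Defs
  imports "HOL-Probability.Probability"
begin

definition partial_sum :: "(nat \<Rightarrow> 'a \<Rightarrow> 'd::real_vector) \<Rightarrow> nat \<Rightarrow> 'a \<Rightarrow> 'd" where
  "partial_sum \<xi> n \<omega> = (\<Sum>i\<in>{1..n}. \<xi> i \<omega>)"

definition exit_time :: "(nat \<Rightarrow> 'a \<Rightarrow> 'd::real_vector) \<Rightarrow> 'd set \<Rightarrow> 'a \<Rightarrow> enat" where
  "exit_time \<xi> C \<omega> =
     (if \<exists>n\<ge>1. partial_sum \<xi> n \<omega> \<notin> C
      then enat (LEAST n. n \<ge> 1 \<and> partial_sum \<xi> n \<omega> \<notin> C) else \<infinity>)"

definition linear_cone :: "'d::real_vector set \<Rightarrow> bool" where
  "linear_cone C \<longleftrightarrow> (\<forall>c::real. c > 0 \<longrightarrow> (\<lambda>x. c *\<^sub>R x) ` C = C)"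

end

theory Submission
  imports Defs
begin

lemma cone_add:
  assumes "linear_cone C" "convex C" "x \<in> C" "y \<in> C"
  shows "x + y \<in> C"
proof -
  have h: "(1/2::real) *\<^sub>R x + (1/2::real) *\<^sub>R y \<in> C"
    using assms(2-4) by (intro convexD) auto
  have "(\<lambda>x. (2::real) *\<^sub>R x) ` C = C" using assms(1) unfolding linear_cone_def by auto
  hence "(2::real) *\<^sub>R ((1/2::real) *\<^sub>R x + (1/2::real) *\<^sub>R y) \<in> C" using h by blast
  thus ?thesis by (simp add: scaleR_add_right)
qed

lemma psum_in:
  assumes "linear_cone C" "convex C" "\<forall>i\<in>{1..n}. \<xi> i \<omega> \<in> C"
  shows "k \<in> {1..n} \<Longrightarrow> partial_sum \<xi> k \<omega> \<in> C"
proof (induction k)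
  case 0 then show ?case by simp
next
  case (Suc k)
  show ?case
  proof (cases "k = 0")
    case True then show ?thesis using assms Suc by (simp add: partial_sum_def)
  next
    case False
    have "partial_sum \<xi> (Suc k) \<omega> = partial_sum \<xi> k \<omega> + \<xi> (Suc k) \<omega>"
      by (simp add: partial_sum_def)
    moreover have "partial_sum \<xi> k \<omega> \<in> C" using Suc False by auto
    moreover have "\<xi> (Suc k) \<omega> \<in> C" using Suc assms by auto
    ultimately show ?thesis using cone_add[OF assms(1,2)] by simp
  qed
qed

lemma exit_gt_iff:
  "exit_time \<xi> C \<omega> > enat n \<longleftrightarrow> (\<forall>k\<in>{1..n}. partial_sum \<xi> k \<omega> \<in> C)"
proof (cases "\<exists>m\<ge>1. partial_sum \<xi> m \<omega> \<notin> C")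
  case True
  define L where "L = (LEAST m. m \<ge> 1 \<and> partial_sum \<xi> m \<omega> \<notin> C)"
  have L: "L \<ge> 1 \<and> partial_sum \<xi> L \<omega> \<notin> C" unfolding L_def
    using True by (metis (mono_tags, lifting) LeastI)
  have Lmin: "\<And>k. k \<ge> 1 \<Longrightarrow> partial_sum \<xi> k \<omega> \<notin> C \<Longrightarrow> L \<le> k"
    unfolding L_def by (simp add: Least_le)
  have e: "exit_time \<xi> C \<omega> = enat L" using True by (simp add: exit_time_def L_def)
  show ?thesis
  proof
    assume "exit_time \<xi> C \<omega> > enat n"
    hence Ln: "n < L" using e by simp
    show "\<forall>k\<in>{1..n}. partial_sum \<xi> k \<omega> \<in> C"
    proof
      fix k assume k: "k \<in> {1..n}"
      show "partial_sum \<xi> k \<omega> \<in> C"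
      proof (rule ccontr)
        assume "partial_sum \<xi> k \<omega> \<notin> C"
        hence "L \<le> k" using Lmin k by simp
        thus False using Ln k by simp
      qed
    qed
  next
    assume A: "\<forall>k\<in>{1..n}. partial_sum \<xi> k \<omega> \<in> C"
    have "L \<notin> {1..n}" using A L by blast
    hence "n < L" using L by simp
    thus "exit_time \<xi> C \<omega> > enat n" using e by simp
  qed
next
  case False
  have "exit_time \<xi> C \<omega> = \<infinity>" unfolding exit_time_def by (rule if_not_P[OF False])
  then show ?thesis using False by auto
qed

theorem mainTheorem10:
  fixes M :: "'a measure" and \<xi> :: "nat \<Rightarrow> 'a \<Rightarrow> 'd::euclidean_space"
    and C :: "'d set" and \<sigma> :: real
  assumes ps: "prob_space M"
    and rv: "\<And>i. i \<ge> 1 \<Longrightarrow> \<xi> i \<in> borel_measurable M"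
    and indep: "prob_space.indep_vars M (\<lambda>_. borel) \<xi> {1..}"
    and ident: "\<And>i. i \<ge> 1 \<Longrightarrow> distr M borel (\<xi> i) = distr M borel (\<xi> 1)"
    and sq_int: "integrable M (\<lambda>\<omega>. (norm (\<xi> 1 \<omega>))\<^sup>2)"
    and mean0: "integral\<^sup>L M (\<xi> 1) = 0"
    and sigma_pos: "\<sigma>\<^sup>2 > 0"
    and cov: "\<And>u v. integral\<^sup>L M (\<lambda>\<omega>. (u \<bullet> \<xi> 1 \<omega>) * (v \<bullet> \<xi> 1 \<omega>)) = \<sigma>\<^sup>2 * (u \<bullet> v)"
    and cone: "linear_cone C"
    and conv: "convex C"
    and int_ne: "interior C \<noteq> {}"
    and C_borel: "C \<in> sets borel"
    and adapted: "measure M {\<omega>\<in>space M. \<xi> 1 \<omega> \<in> C - {0}} > 0"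
    and moment: "integrable M (\<lambda>\<omega>. (norm (\<xi> 1 \<omega>))\<^sup>2 *
                    (1 / measure M {\<omega>\<in>space M. \<xi> 1 \<omega> \<in> C}) powr ((norm (\<xi> 1 \<omega>))\<^sup>2))"
  shows "(\<forall>n::nat. measure M {\<omega>\<in>space M. exit_time \<xi> C \<omega> > enat n}
            \<ge> (1 / measure M {\<omega>\<in>space M. \<xi> 1 \<omega> \<in> C}) powr (- real n))
       \<and> (\<lambda>n::nat. measure M {\<omega>\<in>space M. (\<exists>i\<in>{1..n}. norm (\<xi> i \<omega>) > sqrt (real n))
                                        \<and> exit_time \<xi> C \<omega> > enat n}
                  / measure M {\<omega>\<in>space M. exit_time \<xi> C \<omega> > enat n}) \<longlonglongrightarrow> 0"
proof -
  interpret prob_space M by (rule ps)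
  define p where "p = prob {\<omega>\<in>space M. \<xi> 1 \<omega> \<in> C}"
  have rv1[measurable]: "\<xi> 1 \<in> borel_measurable M" using rv by simp
  have same: "prob {\<omega>\<in>space M. \<xi> i \<omega> \<in> S} = prob {\<omega>\<in>space M. \<xi> 1 \<omega> \<in> S}"
    if "i \<ge> 1" "S \<in> sets borel" for i S
  proof -
    have "prob {\<omega>\<in>space M. \<xi> i \<omega> \<in> S} = measure (distr M borel (\<xi> i)) S"
      using measure_distr[OF rv[OF that(1)] that(2)] by (simp add: vimage_def Int_def conj_commute)
    also have "\<dots> = measure (distr M borel (\<xi> 1)) S" using ident[OF that(1)] by simp
    also have "\<dots> = prob {\<omega>\<in>space M. \<xi> 1 \<omega> \<in> S}"
      using measure_distr[OF rv1 that(2)] by (simp add: vimage_def Int_def conj_commute)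
    finally show ?thesis .
  qed
  have setC: "{\<omega>\<in>space M. \<xi> i \<omega> \<in> S} \<in> sets M" if "i \<ge> 1" "S \<in> sets borel" for i S
  proof -
    have "{\<omega>\<in>space M. \<xi> i \<omega> \<in> S} = \<xi> i -` S \<inter> space M" by auto
    thus ?thesis using measurable_sets[OF rv[OF that(1)] that(2)] by simp
  qed
  have p_pos: "p > 0"
  proof -
    have "measure M {\<omega>\<in>space M. \<xi> 1 \<omega> \<in> C - {0}} \<le> p"
      unfolding p_def by (rule finite_measure_mono[OF _ setC[OF _ C_borel]]) auto
    thus ?thesis using adapted by linarith
  qed
  have p_le: "p \<le> 1" unfolding p_def by simp
  define a where "a = 1 / p"
  have a_ge: "a \<ge> 1" using p_pos p_le by (simp add: a_def)
  have a_pos: "a > 0" using a_ge by simp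
  have psm[measurable]: "partial_sum \<xi> k \<in> borel_measurable M" for k
    unfolding partial_sum_def by (intro borel_measurable_sum) (auto intro: rv)
  have Tset: "{\<omega>\<in>space M. exit_time \<xi> C \<omega> > enat n}
        = {\<omega>\<in>space M. \<forall>k\<in>{1..n}. partial_sum \<xi> k \<omega> \<in> C}" for n
    by (simp add: exit_gt_iff)
  have Tsets: "{\<omega>\<in>space M. exit_time \<xi> C \<omega> > enat n} \<in> sets M" for n
  proof -
    have "{\<omega>\<in>space M. partial_sum \<xi> k \<omega> \<in> C} \<in> sets M" for k
    proof -
      have "{\<omega>\<in>space M. partial_sum \<xi> k \<omega> \<in> C} = partial_sum \<xi> k -` C \<inter> space M" by auto
      thus ?thesis using measurable_sets[OF psm C_borel] by simp
    qed
    thus ?thesis unfolding Tset by (intro sets.sets_Collect_finite_All) auto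
  qed
  have lower: "prob {\<omega>\<in>space M. exit_time \<xi> C \<omega> > enat n} \<ge> p ^ n" for n
  proof (cases "n = 0")
    case True
    have "{\<omega>\<in>space M. exit_time \<xi> C \<omega> > enat n} = space M" unfolding Tset using True by auto
    thus ?thesis using True by (simp add: prob_space.prob_space[OF ps])
  next
    case False
    have sub: "(\<Inter>i\<in>{1..n}. \<xi> i -` C \<inter> space M) \<subseteq> {\<omega>\<in>space M. \<forall>k\<in>{1..n}. partial_sum \<xi> k \<omega> \<in> C}"
    proof (intro subsetI)
      fix \<omega> assume \<omega>: "\<omega> \<in> (\<Inter>i\<in>{1..n}. \<xi> i -` C \<inter> space M)"
      have "1 \<in> {1..n}" using False by simp
      hence sp: "\<omega> \<in> space M" using \<omega> by blast
      have all: "\<forall>i\<in>{1..n}. \<xi> i \<omega> \<in> C" using \<omega> by blast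
      show "\<omega> \<in> {\<omega>\<in>space M. \<forall>k\<in>{1..n}. partial_sum \<xi> k \<omega> \<in> C}"
        using sp psum_in[OF cone conv, where \<xi>=\<xi> and \<omega>=\<omega> and n=n, OF all] by blast
    qed
    have m1: "prob (\<Inter>i\<in>{1..n}. \<xi> i -` C \<inter> space M) \<le> prob {\<omega>\<in>space M. exit_time \<xi> C \<omega> > enat n}"
      unfolding Tset by (rule finite_measure_mono[OF sub]) (rule Tsets[of n, unfolded Tset])
    have ne: "{1..n} \<noteq> {}" using False by simp
    have m2: "prob (\<Inter>i\<in>{1..n}. \<xi> i -` C \<inter> space M) = (\<Prod>i\<in>{1..n}. prob (\<xi> i -` C \<inter> space M))"
      by (rule indep_varsD[OF indep ne finite_atLeastAtMost, of "\<lambda>_. C"]) (auto simp: C_borel)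
    have m3: "prob (\<xi> i -` C \<inter> space M) = p" if "i \<in> {1..n}" for i
    proof -
      have "\<xi> i -` C \<inter> space M = {\<omega>\<in>space M. \<xi> i \<omega> \<in> C}" by blast
      moreover have "i \<ge> 1" using that by simp
      ultimately show ?thesis using same[of i C] C_borel by (simp add: p_def)
    qed
    have m4: "(\<Prod>i\<in>{1..n}. prob (\<xi> i -` C \<inter> space M)) = p ^ n"
    proof -
      have "(\<Prod>i\<in>{1..n}. prob (\<xi> i -` C \<inter> space M)) = (\<Prod>i\<in>{1..n}. p)"
        by (rule prod.cong[OF refl m3])
      thus ?thesis by simp
    qed
    show ?thesis using m1 m2 m4 by simp
  qed
  have rhs: "(1 / measure M {\<omega>\<in>space M. \<xi> 1 \<omega> \<in> C}) powr (- real n) = p ^ n" for n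
    unfolding p_def[symmetric] using p_pos by (simp add: powr_minus powr_realpow power_one_over)
  have part1: "\<forall>n::nat. measure M {\<omega>\<in>space M. exit_time \<xi> C \<omega> > enat n}
            \<ge> (1 / measure M {\<omega>\<in>space M. \<xi> 1 \<omega> \<in> C}) powr (- real n)"
    using lower rhs by simp
  define Y where "Y = (\<lambda>\<omega>. (norm (\<xi> 1 \<omega>))\<^sup>2)"
  define g where "g = (\<lambda>\<omega>. Y \<omega> * a powr Y \<omega>)"
  have g_int: "integrable M g" using moment by (simp add: g_def Y_def a_def p_def)
  have g_meas[measurable]: "g \<in> borel_measurable M" using g_int by auto
  have Y_meas[measurable]: "Y \<in> borel_measurable M" unfolding Y_def by measurable
  have g_nn: "g \<omega> \<ge> 0" for \<omega> by (simp add: g_def Y_def)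
  define s where "s = (\<lambda>(n::nat) \<omega>. if Y \<omega> > real n then g \<omega> else 0)"
  have s_meas[measurable]: "s n \<in> borel_measurable M" for n unfolding s_def by measurable
  have eps_lim: "(\<lambda>n. integral\<^sup>L M (s n)) \<longlonglongrightarrow> integral\<^sup>L M (\<lambda>_. 0::real)"
  proof (rule integral_dominated_convergence[where w = g])
    show "AE x in M. (\<lambda>i. s i x) \<longlonglongrightarrow> 0"
    proof (intro AE_I2 tendsto_eventually)
      fix x
      show "\<forall>\<^sub>F i in sequentially. s i x = 0"
        unfolding eventually_sequentially
      proof (intro exI allI impI)
        fix i assume "nat \<lceil>Y x\<rceil> \<le> i"
        hence "Y x \<le> real i" by linarith
        thus "s i x = 0" by (simp add: s_def)
      qed
    qed
    show "AE x in M. norm (s i x) \<le> g x" for i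
      using g_nn by (intro AE_I2) (simp add: s_def)
  qed (auto simp: g_int)
  have s_int: "integrable M (s n)" for n
  proof (rule integrable_dominated_convergence2[where w = g and f = "\<lambda>_. 0::real"])
    show "AE x in M. (\<lambda>i. s i x) \<longlonglongrightarrow> 0"
    proof (intro AE_I2 tendsto_eventually)
      fix x
      show "\<forall>\<^sub>F i in sequentially. s i x = 0"
        unfolding eventually_sequentially
      proof (intro exI allI impI)
        fix i assume "nat \<lceil>Y x\<rceil> \<le> i"
        hence "Y x \<le> real i" by linarith
        thus "s i x = 0" by (simp add: s_def)
      qed
    qed
    show "AE x in M. norm (s i x) \<le> g x" for i
      using g_nn by (intro AE_I2) (simp add: s_def)
  qed (auto simp: g_int)
  define Sn where "Sn = (\<lambda>n::nat. {\<omega>\<in>space M. Y \<omega> > real n})"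
  have Sn_sets: "Sn n \<in> sets M" for n unfolding Sn_def by measurable
  have key: "real n * a ^ n * prob (Sn n) \<le> integral\<^sup>L M (s n)" for n
  proof -
    have "real n * a ^ n * prob (Sn n) = integral\<^sup>L M (\<lambda>\<omega>. indicator (Sn n) \<omega> * (real n * a ^ n))"
      using Sn_sets by simp
    also have "\<dots> \<le> integral\<^sup>L M (s n)"
    proof (rule integral_mono)
      show "integrable M (\<lambda>\<omega>. indicator (Sn n) \<omega> * (real n * a ^ n))"
        using Sn_sets by (intro integrable_mult_left integrable_real_indicator) (auto simp: less_top[symmetric])
      show "integrable M (s n)" by (rule s_int)
      fix \<omega> assume "\<omega> \<in> space M"
      show "indicator (Sn n) \<omega> * (real n * a ^ n) \<le> s n \<omega>"
      proof (cases "Y \<omega> > real n")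
        case True
        have "a ^ n = a powr real n" using a_pos by (simp add: powr_realpow)
        also have "\<dots> \<le> a powr Y \<omega>" using a_ge True by (intro powr_mono) auto
        finally have "real n * a ^ n \<le> Y \<omega> * a powr Y \<omega>"
          using True a_pos by (intro mult_mono) auto
        thus ?thesis using True by (simp add: s_def g_def Sn_def indicator_def)
      next
        case False
        thus ?thesis using g_nn by (simp add: s_def Sn_def indicator_def)
      qed
    qed
    finally show ?thesis .
  qed
  have opn: "{x::'d. sqrt (real n) < norm x} \<in> sets borel" for n
    by (intro borel_open open_Collect_less) (auto intro: continuous_intros)
  have sq: "sqrt (real n) < t \<longleftrightarrow> real n < t\<^sup>2" if "t \<ge> 0" for t :: real and n :: nat
  proof -
    have "sqrt (t\<^sup>2) = t" using that by simp
    thus ?thesis by (metis real_sqrt_less_iff)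
  qed
  have num: "measure M {\<omega>\<in>space M. (\<exists>i\<in>{1..n}. norm (\<xi> i \<omega>) > sqrt (real n))
                                        \<and> exit_time \<xi> C \<omega> > enat n} \<le> real n * prob (Sn n)" for n
  proof -
    have "measure M {\<omega>\<in>space M. (\<exists>i\<in>{1..n}. norm (\<xi> i \<omega>) > sqrt (real n))
                                        \<and> exit_time \<xi> C \<omega> > enat n}
        \<le> prob (\<Union>i\<in>{1..n}. {\<omega>\<in>space M. \<xi> i \<omega> \<in> {x. sqrt (real n) < norm x}})"
      by (rule finite_measure_mono[OF _ sets.finite_UN[OF _ setC[OF _ opn]]]) auto
    also have "\<dots> \<le> (\<Sum>i\<in>{1..n}. prob {\<omega>\<in>space M. \<xi> i \<omega> \<in> {x. sqrt (real n) < norm x}})"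
      by (rule finite_measure_subadditive_finite) (use setC[OF _ opn] in auto)
    also have "\<dots> = (\<Sum>i\<in>{1..n}. prob (Sn n))"
    proof (rule sum.cong)
      fix i assume "i \<in> {1..n}"
      hence "prob {\<omega>\<in>space M. \<xi> i \<omega> \<in> {x. sqrt (real n) < norm x}}
            = prob {\<omega>\<in>space M. \<xi> 1 \<omega> \<in> {x. sqrt (real n) < norm x}}"
        by (intro same opn) auto
      also have "{\<omega>\<in>space M. \<xi> 1 \<omega> \<in> {x. sqrt (real n) < norm x}} = Sn n"
        unfolding Sn_def Y_def using sq by auto
      finally show "prob {\<omega>\<in>space M. \<xi> i \<omega> \<in> {x. sqrt (real n) < norm x}} = prob (Sn n)" .
    qed simp
    also have "\<dots> = real n * prob (Sn n)" by simp
    finally show ?thesis .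
  qed
  define R where "R = (\<lambda>n::nat. measure M {\<omega>\<in>space M. (\<exists>i\<in>{1..n}. norm (\<xi> i \<omega>) > sqrt (real n))
                                        \<and> exit_time \<xi> C \<omega> > enat n}
                  / measure M {\<omega>\<in>space M. exit_time \<xi> C \<omega> > enat n})"
  have Rle: "R n \<le> integral\<^sup>L M (s n)" for n
  proof -
    have pn: "p ^ n > 0" using p_pos by simp
    have den: "measure M {\<omega>\<in>space M. exit_time \<xi> C \<omega> > enat n} \<ge> p ^ n" by (rule lower)
    have "R n \<le> real n * prob (Sn n) / p ^ n"
      unfolding R_def using num[of n] den pn
      by (intro frac_le) auto
    also have "\<dots> = real n * a ^ n * prob (Sn n)"
      using p_pos by (simp add: a_def power_one_over field_simps)
    also have "\<dots> \<le> integral\<^sup>L M (s n)" by (rule key)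
    finally show ?thesis .
  qed
  have Rge: "R n \<ge> 0" for n unfolding R_def by simp
  have "R \<longlonglongrightarrow> 0"
    by (rule tendsto_sandwich[of "\<lambda>_. 0" R sequentially "\<lambda>n. integral\<^sup>L M (s n)"])
       (use Rge Rle eps_lim in auto)
  thus ?thesis using part1 unfolding R_def by simp
qed


end
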